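(* Let $\mathbb G$ be a special 2-group, $(n,\rho,\beta,c)$ and $(n',\rho',\beta',c')$ admissible quadruples, and $\mathcal O\subseteq M(n',n)$ an intertwining $\pi_0(\mathbb G)$-orbit. Then $z_{\mathcal O}\in Z^2(\pi_0(\mathbb G),\mathcal F(\mathcal O,\mathbb C^* )_{\rho,\rho'})$. Moreover, if $c$ and $c'$ are replaced by $\tilde c=c\,\partial x$ and $\tilde c'=c'\,\partial x'$ for normalized 1-cochains $x,x'$ (so that $\tilde c,\tilde c'$ have the same classes as $c,c'$ modulo coboundaries), the resulting cocycle $\tilde z_{\mathcal O}$ is cohomologous to $z_{\mathcal O}$; thus the cohomology class of $z_{\mathcal O}$ depends only on the classes of $c$ and $c'$ modulo coboundaries.
   Context: $\mathbb G$ special 2-group: skeletal monoidal groupoid with strictly invertible objects and trivial unit constraints; objects form the group $\pi_0(\mathbb G)$, $\pi_1(\mathbb G)=\mathrm{Aut}(e)$ is a $\pi_0(\mathbb G)$-module via $g\cdot u=\gamma_g^{-1}(\delta_g(u))$ ($\gamma_g(u)=u\otimes\mathrm{id}_g$, $\delta_g(u)=\mathrm{id}_g\otimes u$), canonical classifying 3-cocycle $\alpha(g_1,g_2,g_3)=\gamma^{-1}_{g_1g_2g_3}(a_{g_1,g_2,g_3})$. $S_n$ acts on $(\mathbb C^* )^n$ by $(\sigma\cdot\boldsymbol\lambda)_i=\lambda_{\sigma^{-1}(i)}$; $(\mathbb C^* )^n_\rho$ has $\pi_0(\mathbb G)$ acting through $\rho$. An admissible quadruple $(n,\rho,\beta,c)$: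 $n\ge1$, $\rho:\pi_0(\mathbb G)\to S_n$ a homomorphism, $\beta:\pi_1(\mathbb G)\to(\mathbb C^* )^n_\rho$ a module homomorphism with $[\beta\circ\alpha]=0$ in $H^3$, $c$ a normalized 2-cochain with values in $(\mathbb C^* )^n_\rho$ with $\partial c=\beta\circ\alpha$ (multiplicative notation, standard group-cochain coboundary). $M(n',n)=\{1,\dots,n'\}\times\{1,\dots,n\}$ with right action $(i',i)\cdot g=(\rho'(g)^{-1}(i'),\rho(g)^{-1}(i))$; $I(\beta,\beta')=\{(i',i):\beta'_{i'}=\beta_i\}$; an orbit $\mathcal O$ is intertwining if $\mathcal O\subseteq I(\beta,\beta')$. $\mathcal F(\mathcal O,\mathbb C^* )_{\rho,\rho'}$ is the multiplicative group of functions $\lambda:\mathcal O\to\mathbb C^*$ with $\pi_0(\mathbb G)$-module structure $(g\cdot\lambda)(p)=\lambda(p\cdot g)$. $z_{\mathcal O}(g_1,g_2)(i',i)=c'(g_1,g_2)_{i'}/c(g_1,g_2)_i$ for $(i',i)\in\mathcal O$. *)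

theory Defs
  imports "HOL-Algebra.Group" "HOL-Combinatorics.Permutations" Complex_Main
begin

text \<open>Since the groupoid is skeletal, the only
morphisms are automorphisms; Aut g is the set of automorphisms of the object g
(the sets for distinct objects are disjoint).  cmp is composition (cmp u v = u after v),
idm g the identity of g, tns the tensor product on morphisms, asc g1 g2 g3 the associator
(g1 g2) g3 to g1 (g2 g3) (objects multiply strictly associatively), unit constraints trivial.\<close>

record ('g, 'm) two_group =
  obj :: "'g monoid"
  Aut :: "'g \<Rightarrow> 'm set"
  cmp :: "'m \<Rightarrow> 'm \<Rightarrow> 'm"
  idm :: "'g \<Rightarrow> 'm"
  tns :: "'m \<Rightarrow> 'm \<Rightarrow> 'm"
  asc :: "'g \<Rightarrow> 'g \<Rightarrow> 'g \<Rightarrow> 'm"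

definition special_2group :: "('g, 'm) two_group \<Rightarrow> bool" where
  "special_2group GG \<longleftrightarrow>
     (let G = obj GG; e = \<one>\<^bsub>G\<^esub> in
      group G \<and>
      (\<forall>g\<in>carrier G. group \<lparr>carrier = Aut GG g, monoid.mult = cmp GG, one = idm GG g\<rparr>) \<and>
      (\<forall>g\<in>carrier G. \<forall>h\<in>carrier G. g \<noteq> h \<longrightarrow> Aut GG g \<inter> Aut GG h = {}) \<and>
      \<comment> \<open>tensor product is a bifunctor\<close>
      (\<forall>g\<in>carrier G. \<forall>h\<in>carrier G. \<forall>u\<in>Aut GG g. \<forall>v\<in>Aut GG h.
          tns GG u v \<in> Aut GG (g \<otimes>\<^bsub>G\<^esub> h)) \<and>
      (\<forall>g\<in>carrier G. \<forall>h\<in>carrier G.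
          tns GG (idm GG g) (idm GG h) = idm GG (g \<otimes>\<^bsub>G\<^esub> h)) \<and>
      (\<forall>g\<in>carrier G. \<forall>h\<in>carrier G. \<forall>u\<in>Aut GG g. \<forall>u'\<in>Aut GG g. \<forall>v\<in>Aut GG h. \<forall>v'\<in>Aut GG h.
          tns GG (cmp GG u u') (cmp GG v v') = cmp GG (tns GG u v) (tns GG u' v')) \<and>
      \<comment> \<open>associator: components and naturality\<close>
      (\<forall>g1\<in>carrier G. \<forall>g2\<in>carrier G. \<forall>g3\<in>carrier G.
          asc GG g1 g2 g3 \<in> Aut GG (g1 \<otimes>\<^bsub>G\<^esub> g2 \<otimes>\<^bsub>G\<^esub> g3)) \<and>
      (\<forall>g1\<in>carrier G. \<forall>g2\<in>carrier G. \<forall>g3\<in>carrier G.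
        \<forall>u1\<in>Aut GG g1. \<forall>u2\<in>Aut GG g2. \<forall>u3\<in>Aut GG g3.
          cmp GG (asc GG g1 g2 g3) (tns GG (tns GG u1 u2) u3)
          = cmp GG (tns GG u1 (tns GG u2 u3)) (asc GG g1 g2 g3)) \<and>
      \<comment> \<open>pentagon\<close>
      (\<forall>g1\<in>carrier G. \<forall>g2\<in>carrier G. \<forall>g3\<in>carrier G. \<forall>g4\<in>carrier G.
          cmp GG (asc GG g1 g2 (g3 \<otimes>\<^bsub>G\<^esub> g4)) (asc GG (g1 \<otimes>\<^bsub>G\<^esub> g2) g3 g4)
          = cmp GG (tns GG (idm GG g1) (asc GG g2 g3 g4))
              (cmp GG (asc GG g1 (g2 \<otimes>\<^bsub>G\<^esub> g3) g4) (tns GG (asc GG g1 g2 g3) (idm GG g4)))) \<and>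
      \<comment> \<open>trivial unit constraints (identity unitors are natural; triangle axiom)\<close>
      (\<forall>g\<in>carrier G. \<forall>u\<in>Aut GG g. tns GG (idm GG e) u = u \<and> tns GG u (idm GG e) = u) \<and>
      (\<forall>g\<in>carrier G. \<forall>h\<in>carrier G. asc GG g e h = idm GG (g \<otimes>\<^bsub>G\<^esub> h)))"

abbreviation pi0 :: "('g, 'm) two_group \<Rightarrow> 'g monoid" where "pi0 GG \<equiv> obj GG"
abbreviation e2 :: "('g, 'm) two_group \<Rightarrow> 'g" where "e2 GG \<equiv> \<one>\<^bsub>obj GG\<^esub>"
abbreviation pi1 :: "('g, 'm) two_group \<Rightarrow> 'm set" where "pi1 GG \<equiv> Aut GG (e2 GG)"

definition gam :: "('g, 'm) two_group \<Rightarrow> 'g \<Rightarrow> 'm \<Rightarrow> 'm" where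
  "gam GG g u = tns GG u (idm GG g)"
definition del :: "('g, 'm) two_group \<Rightarrow> 'g \<Rightarrow> 'm \<Rightarrow> 'm" where
  "del GG g u = tns GG (idm GG g) u"
definition gam_inv :: "('g, 'm) two_group \<Rightarrow> 'g \<Rightarrow> 'm \<Rightarrow> 'm" where
  "gam_inv GG g = the_inv_into (pi1 GG) (gam GG g)"

text \<open>The pi_0-module structure on pi_1 and the canonical classifying 3-cocycle.\<close>
definition act1 :: "('g, 'm) two_group \<Rightarrow> 'g \<Rightarrow> 'm \<Rightarrow> 'm" where
  "act1 GG g u = gam_inv GG g (del GG g u)"
definition alpha :: "('g, 'm) two_group \<Rightarrow> 'g \<Rightarrow> 'g \<Rightarrow> 'g \<Rightarrow> 'm" where
  "alpha GG g1 g2 g3 =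
     gam_inv GG (g1 \<otimes>\<^bsub>obj GG\<^esub> g2 \<otimes>\<^bsub>obj GG\<^esub> g3) (asc GG g1 g2 g3)"

text \<open>A module of the form (functions X \<rightarrow> C*) with a pi_0-action act.  Elements are
represented as functions 'x \<Rightarrow> complex, compared only on X.\<close>

definition units_on :: "'x set \<Rightarrow> ('x \<Rightarrow> complex) \<Rightarrow> bool" where
  "units_on X f \<longleftrightarrow> (\<forall>x\<in>X. f x \<noteq> 0)"

definition eq_on :: "'x set \<Rightarrow> ('x \<Rightarrow> complex) \<Rightarrow> ('x \<Rightarrow> complex) \<Rightarrow> bool" where
  "eq_on X f h \<longleftrightarrow> (\<forall>x\<in>X. f x = h x)"

definition cob1 :: "'g monoid \<Rightarrow> ('g \<Rightarrow> ('x \<Rightarrow> complex) \<Rightarrow> ('x \<Rightarrow> complex))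
    \<Rightarrow> ('g \<Rightarrow> 'x \<Rightarrow> complex) \<Rightarrow> 'g \<Rightarrow> 'g \<Rightarrow> 'x \<Rightarrow> complex" where
  "cob1 G act y g1 g2 = (\<lambda>x. act g1 (y g2) x * y g1 x / y (g1 \<otimes>\<^bsub>G\<^esub> g2) x)"

definition cob2 :: "'g monoid \<Rightarrow> ('g \<Rightarrow> ('x \<Rightarrow> complex) \<Rightarrow> ('x \<Rightarrow> complex))
    \<Rightarrow> ('g \<Rightarrow> 'g \<Rightarrow> 'x \<Rightarrow> complex) \<Rightarrow> 'g \<Rightarrow> 'g \<Rightarrow> 'g \<Rightarrow> 'x \<Rightarrow> complex" where
  "cob2 G act c g1 g2 g3 = (\<lambda>x. act g1 (c g2 g3) x * c g1 (g2 \<otimes>\<^bsub>G\<^esub> g3) x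
                                  / (c (g1 \<otimes>\<^bsub>G\<^esub> g2) g3 x * c g1 g2 x))"

definition cochain1 :: "'g monoid \<Rightarrow> 'x set \<Rightarrow> ('g \<Rightarrow> 'x \<Rightarrow> complex) \<Rightarrow> bool" where
  "cochain1 G X y \<longleftrightarrow> (\<forall>g\<in>carrier G. units_on X (y g))"

definition normalized_cochain1 :: "'g monoid \<Rightarrow> 'x set \<Rightarrow> ('g \<Rightarrow> 'x \<Rightarrow> complex) \<Rightarrow> bool" where
  "normalized_cochain1 G X y \<longleftrightarrow> cochain1 G X y \<and> eq_on X (y \<one>\<^bsub>G\<^esub>) (\<lambda>_. 1)"

definition cochain2 :: "'g monoid \<Rightarrow> 'x set \<Rightarrow> ('g \<Rightarrow> 'g \<Rightarrow> 'x \<Rightarrow> complex) \<Rightarrow> bool" where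
  "cochain2 G X c \<longleftrightarrow> (\<forall>g1\<in>carrier G. \<forall>g2\<in>carrier G. units_on X (c g1 g2))"

definition normalized_cochain2 :: "'g monoid \<Rightarrow> 'x set \<Rightarrow> ('g \<Rightarrow> 'g \<Rightarrow> 'x \<Rightarrow> complex) \<Rightarrow> bool" where
  "normalized_cochain2 G X c \<longleftrightarrow> cochain2 G X c \<and>
     (\<forall>g\<in>carrier G. eq_on X (c \<one>\<^bsub>G\<^esub> g) (\<lambda>_. 1) \<and> eq_on X (c g \<one>\<^bsub>G\<^esub>) (\<lambda>_. 1))"

definition Z2 :: "'g monoid \<Rightarrow> 'x set \<Rightarrow> ('g \<Rightarrow> ('x \<Rightarrow> complex) \<Rightarrow> ('x \<Rightarrow> complex))
    \<Rightarrow> ('g \<Rightarrow> 'g \<Rightarrow> 'x \<Rightarrow> complex) set" where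
  "Z2 G X act = {z. cochain2 G X z \<and>
     (\<forall>g1\<in>carrier G. \<forall>g2\<in>carrier G. \<forall>g3\<in>carrier G. eq_on X (cob2 G act z g1 g2 g3) (\<lambda>_. 1))}"

definition cohomologous2 :: "'g monoid \<Rightarrow> 'x set \<Rightarrow> ('g \<Rightarrow> ('x \<Rightarrow> complex) \<Rightarrow> ('x \<Rightarrow> complex))
    \<Rightarrow> ('g \<Rightarrow> 'g \<Rightarrow> 'x \<Rightarrow> complex) \<Rightarrow> ('g \<Rightarrow> 'g \<Rightarrow> 'x \<Rightarrow> complex) \<Rightarrow> bool" where
  "cohomologous2 G X act z w \<longleftrightarrow> (\<exists>y. cochain1 G X y \<and>
     (\<forall>g1\<in>carrier G. \<forall>g2\<in>carrier G.
        eq_on X (w g1 g2) (\<lambda>x. z g1 g2 x * cob1 G act y g1 g2 x)))"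

definition vact :: "('g \<Rightarrow> nat \<Rightarrow> nat) \<Rightarrow> 'g \<Rightarrow> (nat \<Rightarrow> complex) \<Rightarrow> nat \<Rightarrow> complex" where
  "vact \<rho> g l = (\<lambda>i. l (Hilbert_Choice.inv (\<rho> g) i))"

definition perm_rep :: "'g monoid \<Rightarrow> nat \<Rightarrow> ('g \<Rightarrow> nat \<Rightarrow> nat) \<Rightarrow> bool" where
  "perm_rep G n \<rho> \<longleftrightarrow> (\<forall>g\<in>carrier G. \<rho> g permutes {1..n}) \<and>
     (\<forall>g\<in>carrier G. \<forall>h\<in>carrier G. \<rho> (g \<otimes>\<^bsub>G\<^esub> h) = \<rho> g \<circ> \<rho> h)"

definition module_hom :: "('g, 'm) two_group \<Rightarrow> nat \<Rightarrow> ('g \<Rightarrow> nat \<Rightarrow> nat)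
    \<Rightarrow> ('m \<Rightarrow> nat \<Rightarrow> complex) \<Rightarrow> bool" where
  "module_hom GG n \<rho> \<beta> \<longleftrightarrow>
     (\<forall>u\<in>pi1 GG. units_on {1..n} (\<beta> u)) \<and>
     (\<forall>u\<in>pi1 GG. \<forall>v\<in>pi1 GG. eq_on {1..n} (\<beta> (cmp GG u v)) (\<lambda>i. \<beta> u i * \<beta> v i)) \<and>
     (\<forall>g\<in>carrier (pi0 GG). \<forall>u\<in>pi1 GG. eq_on {1..n} (\<beta> (act1 GG g u)) (vact \<rho> g (\<beta> u)))"

definition admissible :: "('g, 'm) two_group \<Rightarrow> nat \<Rightarrow> ('g \<Rightarrow> nat \<Rightarrow> nat)
    \<Rightarrow> ('m \<Rightarrow> nat \<Rightarrow> complex) \<Rightarrow> ('g \<Rightarrow> 'g \<Rightarrow> nat \<Rightarrow> complex) \<Rightarrow> bool" where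
  "admissible GG n \<rho> \<beta> c \<longleftrightarrow>
     n \<ge> 1 \<and> perm_rep (pi0 GG) n \<rho> \<and> module_hom GG n \<rho> \<beta> \<and>
     \<comment> \<open>[beta o alpha] = 0 in H^3\<close>
     (\<exists>c0. cochain2 (pi0 GG) {1..n} c0 \<and>
        (\<forall>g1\<in>carrier (pi0 GG). \<forall>g2\<in>carrier (pi0 GG). \<forall>g3\<in>carrier (pi0 GG).
           eq_on {1..n} (cob2 (pi0 GG) (vact \<rho>) c0 g1 g2 g3) (\<beta> (alpha GG g1 g2 g3)))) \<and>
     normalized_cochain2 (pi0 GG) {1..n} c \<and>
     (\<forall>g1\<in>carrier (pi0 GG). \<forall>g2\<in>carrier (pi0 GG). \<forall>g3\<in>carrier (pi0 GG).
        eq_on {1..n} (cob2 (pi0 GG) (vact \<rho>) c g1 g2 g3) (\<beta> (alpha GG g1 g2 g3)))"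

definition Mset :: "nat \<Rightarrow> nat \<Rightarrow> (nat \<times> nat) set" where
  "Mset n' n = {1..n'} \<times> {1..n}"

definition ract :: "('g \<Rightarrow> nat \<Rightarrow> nat) \<Rightarrow> ('g \<Rightarrow> nat \<Rightarrow> nat) \<Rightarrow> nat \<times> nat \<Rightarrow> 'g \<Rightarrow> nat \<times> nat" where
  "ract \<rho> \<rho>' p g = (Hilbert_Choice.inv (\<rho>' g) (fst p), Hilbert_Choice.inv (\<rho> g) (snd p))"

definition is_orbit :: "'g monoid \<Rightarrow> nat \<Rightarrow> nat \<Rightarrow> ('g \<Rightarrow> nat \<Rightarrow> nat) \<Rightarrow> ('g \<Rightarrow> nat \<Rightarrow> nat)
    \<Rightarrow> (nat \<times> nat) set \<Rightarrow> bool" where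
  "is_orbit G n' n \<rho> \<rho>' Orb \<longleftrightarrow> (\<exists>p\<in>Mset n' n. Orb = (\<lambda>g. ract \<rho> \<rho>' p g) ` carrier G)"

definition Iset :: "('g, 'm) two_group \<Rightarrow> nat \<Rightarrow> nat \<Rightarrow> ('m \<Rightarrow> nat \<Rightarrow> complex)
    \<Rightarrow> ('m \<Rightarrow> nat \<Rightarrow> complex) \<Rightarrow> (nat \<times> nat) set" where
  "Iset GG n' n \<beta> \<beta>' = {(i', i) \<in> Mset n' n. (\<lambda>u\<in>pi1 GG. \<beta>' u i') = (\<lambda>u\<in>pi1 GG. \<beta> u i)}"

definition orbit_act :: "('g \<Rightarrow> nat \<Rightarrow> nat) \<Rightarrow> ('g \<Rightarrow> nat \<Rightarrow> nat) \<Rightarrow> 'g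
    \<Rightarrow> (nat \<times> nat \<Rightarrow> complex) \<Rightarrow> nat \<times> nat \<Rightarrow> complex" where
  "orbit_act \<rho> \<rho>' g l = (\<lambda>p. l (ract \<rho> \<rho>' p g))"

definition zO :: "('g \<Rightarrow> 'g \<Rightarrow> nat \<Rightarrow> complex) \<Rightarrow> ('g \<Rightarrow> 'g \<Rightarrow> nat \<Rightarrow> complex)
    \<Rightarrow> 'g \<Rightarrow> 'g \<Rightarrow> nat \<times> nat \<Rightarrow> complex" where
  "zO c c' g1 g2 = (\<lambda>(i', i). c' g1 g2 i' / c g1 g2 i)"

end

theory Submission
  imports Defs
begin


abbreviation AG :: "('g, 'm) two_group \<Rightarrow> 'g \<Rightarrow> 'm monoid" where
  "AG GG g \<equiv> \<lparr>carrier = Aut GG g, monoid.mult = cmp GG, one = idm GG g\<rparr>"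

context
  fixes GG :: "('g, 'm) two_group"
  assumes sp: "special_2group GG"
begin

lemma sp_group: "group (obj GG)"
  using sp unfolding special_2group_def Let_def apply (elim conjE) by blast
lemma sp_aut: "g \<in> carrier (obj GG) \<Longrightarrow> group (AG GG g)"
  using sp unfolding special_2group_def Let_def apply (elim conjE) by blast
lemma sp_tns: "g \<in> carrier (obj GG) \<Longrightarrow> h \<in> carrier (obj GG) \<Longrightarrow> u \<in> Aut GG g \<Longrightarrow> v \<in> Aut GG h
   \<Longrightarrow> tns GG u v \<in> Aut GG (g \<otimes>\<^bsub>obj GG\<^esub> h)"
  using sp unfolding special_2group_def Let_def apply (elim conjE) by blast
lemma sp_tns_idm: "g \<in> carrier (obj GG) \<Longrightarrow> h \<in> carrier (obj GG)
   \<Longrightarrow> tns GG (idm GG g) (idm GG h) = idm GG (g \<otimes>\<^bsub>obj GG\<^esub> h)"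
  using sp unfolding special_2group_def Let_def apply (elim conjE) by blast
lemma sp_asc: "g1 \<in> carrier (obj GG) \<Longrightarrow> g2 \<in> carrier (obj GG) \<Longrightarrow> g3 \<in> carrier (obj GG)
   \<Longrightarrow> asc GG g1 g2 g3 \<in> Aut GG (g1 \<otimes>\<^bsub>obj GG\<^esub> g2 \<otimes>\<^bsub>obj GG\<^esub> g3)"
  using sp unfolding special_2group_def Let_def apply (elim conjE) by blast
lemma sp_nat_all: "\<forall>g1\<in>carrier (obj GG). \<forall>g2\<in>carrier (obj GG). \<forall>g3\<in>carrier (obj GG).
        \<forall>u1\<in>Aut GG g1. \<forall>u2\<in>Aut GG g2. \<forall>u3\<in>Aut GG g3.
          cmp GG (asc GG g1 g2 g3) (tns GG (tns GG u1 u2) u3)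
          = cmp GG (tns GG u1 (tns GG u2 u3)) (asc GG g1 g2 g3)"
  using sp unfolding special_2group_def Let_def apply (elim conjE) by assumption
lemma sp_nat: "g1 \<in> carrier (obj GG) \<Longrightarrow> g2 \<in> carrier (obj GG) \<Longrightarrow> g3 \<in> carrier (obj GG)
   \<Longrightarrow> u1 \<in> Aut GG g1 \<Longrightarrow> u2 \<in> Aut GG g2 \<Longrightarrow> u3 \<in> Aut GG g3 \<Longrightarrow>
          cmp GG (asc GG g1 g2 g3) (tns GG (tns GG u1 u2) u3)
          = cmp GG (tns GG u1 (tns GG u2 u3)) (asc GG g1 g2 g3)"
  using sp_nat_all by simp
lemma sp_unit_all: "\<forall>g\<in>carrier (obj GG). \<forall>u\<in>Aut GG g.
   tns GG (idm GG (e2 GG)) u = u \<and> tns GG u (idm GG (e2 GG)) = u"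
  using sp unfolding special_2group_def Let_def apply (elim conjE) by assumption
lemma sp_unit: "g \<in> carrier (obj GG) \<Longrightarrow> u \<in> Aut GG g \<Longrightarrow>
   tns GG (idm GG (e2 GG)) u = u \<and> tns GG u (idm GG (e2 GG)) = u"
  using sp_unit_all by blast

lemma idm_mem: "g \<in> carrier (obj GG) \<Longrightarrow> idm GG g \<in> Aut GG g"
  using monoid.one_closed[OF group.is_monoid[OF sp_aut]] by fastforce

lemma gam_inj: assumes g: "g \<in> carrier (obj GG)" shows "inj_on (gam GG g) (pi1 GG)"
proof (rule inj_onI)
  interpret G: group "obj GG" by (rule sp_group)
  interpret E: group "AG GG (e2 GG)" by (rule sp_aut) simp
  fix u v assume u: "u \<in> pi1 GG" and v: "v \<in> pi1 GG" and eq: "gam GG g u = gam GG g v"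
  define h where "h = inv\<^bsub>obj GG\<^esub> g"
  have h: "h \<in> carrier (obj GG)" using g h_def by simp
  have gh: "g \<otimes>\<^bsub>obj GG\<^esub> h = e2 GG" using g h_def by simp
  define a where "a = asc GG (e2 GG) g h"
  have a: "a \<in> pi1 GG" using sp_asc[of "e2 GG" g h] g h gh a_def by simp
  have key: "cmp GG a (tns GG (gam GG g w) (idm GG h)) = cmp GG w a" if w: "w \<in> pi1 GG" for w
  proof -
    have "cmp GG a (tns GG (gam GG g w) (idm GG h)) = cmp GG (tns GG w (tns GG (idm GG g) (idm GG h))) a"
      unfolding gam_def a_def by (rule sp_nat) (use g h w idm_mem in auto)
    also have "\<dots> = cmp GG w a" using sp_tns_idm[OF g h] gh sp_unit[of "e2 GG" w] w by simp
    finally show ?thesis .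
  qed
  have "cmp GG u a = cmp GG v a" using key[OF u] key[OF v] eq by simp
  then show "u = v" using E.right_cancel[of a u v] a u v by simp
qed

lemma gam_surj: assumes g: "g \<in> carrier (obj GG)" shows "Aut GG g \<subseteq> gam GG g ` pi1 GG"
proof
  interpret G: group "obj GG" by (rule sp_group)
  interpret A: group "AG GG g" by (rule sp_aut[OF g])
  fix w assume w: "w \<in> Aut GG g"
  define h where "h = inv\<^bsub>obj GG\<^esub> g"
  have h: "h \<in> carrier (obj GG)" using g h_def by simp
  have gh: "g \<otimes>\<^bsub>obj GG\<^esub> h = e2 GG" using g h_def by simp
  have hg: "h \<otimes>\<^bsub>obj GG\<^esub> g = e2 GG" using g h_def by simp
  have ghg: "g \<otimes>\<^bsub>obj GG\<^esub> h \<otimes>\<^bsub>obj GG\<^esub> g = g" using gh g by simp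
  define a where "a = asc GG g h g"
  have a: "a \<in> Aut GG g" using sp_asc[of g h g] g h ghg a_def by simp
  define ai where "ai = inv\<^bsub>AG GG g\<^esub> a"
  have ai: "ai \<in> Aut GG g" using a ai_def A.inv_closed by fastforce
  have aia: "cmp GG ai a = idm GG g" using a ai_def A.l_inv by fastforce
  define w' where "w' = cmp GG a (cmp GG w ai)"
  have w': "w' \<in> Aut GG g" using a ai w w'_def A.m_closed by fastforce
  define u where "u = tns GG w' (idm GG h)"
  have u: "u \<in> pi1 GG" using sp_tns[OF g h w' idm_mem[OF h]] gh u_def by simp
  have gu: "gam GG g u \<in> Aut GG g" unfolding gam_def using sp_tns[OF _ g u idm_mem[OF g]] g by simp
  have "cmp GG a (gam GG g u) = cmp GG (tns GG w' (tns GG (idm GG h) (idm GG g))) a"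
    unfolding gam_def u_def a_def by (rule sp_nat) (use g h w' idm_mem in auto)
  also have "\<dots> = cmp GG w' a" using sp_tns_idm[OF h g] hg sp_unit[OF g w'] by simp
  also have "\<dots> = cmp GG a w"
    using A.m_assoc[of a w ai] A.m_assoc[of "cmp GG a w" ai a] aia A.r_one[of "cmp GG a w"]
      A.m_closed[of a w] a w ai unfolding w'_def by simp
  finally have "gam GG g u = w" using A.Units_l_cancel[of a "gam GG g u" w] A.Units_eq a gu w by simp
  then show "w \<in> gam GG g ` pi1 GG" using u by blast
qed

lemma alpha_mem: assumes "g1 \<in> carrier (obj GG)" "g2 \<in> carrier (obj GG)" "g3 \<in> carrier (obj GG)"
  shows "alpha GG g1 g2 g3 \<in> pi1 GG"
proof -
  interpret G: group "obj GG" by (rule sp_group)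
  have g: "g1 \<otimes>\<^bsub>obj GG\<^esub> g2 \<otimes>\<^bsub>obj GG\<^esub> g3 \<in> carrier (obj GG)" using assms by simp
  show ?thesis unfolding alpha_def gam_inv_def
    by (rule the_inv_into_into[OF gam_inj[OF g] _ subset_refl])
       (use gam_surj[OF g] sp_asc[OF assms] in blast)
qed

end


lemma perm_inv_mem: "perm_rep G n \<rho> \<Longrightarrow> g \<in> carrier G \<Longrightarrow> i \<in> {1..n} \<Longrightarrow> Hilbert_Choice.inv (\<rho> g) i \<in> {1..n}"
  unfolding perm_rep_def by (meson permutes_in_image permutes_inv)

lemma perm_inv_mult: "perm_rep G n \<rho> \<Longrightarrow> g \<in> carrier G \<Longrightarrow> h \<in> carrier G \<Longrightarrow>
   Hilbert_Choice.inv (\<rho> (g \<otimes>\<^bsub>G\<^esub> h)) i = Hilbert_Choice.inv (\<rho> h) (Hilbert_Choice.inv (\<rho> g) i)"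
  unfolding perm_rep_def by (metis o_inv_distrib permutes_bij comp_apply)

lemma zO_cob2: "cob2 G (orbit_act \<rho> \<rho>') (zO c c') g1 g2 g3 (i', i) =
   cob2 G (vact \<rho>') c' g1 g2 g3 i' / cob2 G (vact \<rho>) c g1 g2 g3 i"
  unfolding cob2_def orbit_act_def zO_def ract_def vact_def
  by (simp add: divide_inverse mult_ac)

lemma zO_cob1: "zO (\<lambda>g1 g2 i. c g1 g2 i * cob1 G (vact \<rho>) x g1 g2 i)
                   (\<lambda>g1 g2 i. c' g1 g2 i * cob1 G (vact \<rho>') x' g1 g2 i) g1 g2 (i', i)
   = zO c c' g1 g2 (i', i) * cob1 G (orbit_act \<rho> \<rho>') (\<lambda>g (j', j). x' g j' / x g j) g1 g2 (i', i)"
  unfolding cob1_def orbit_act_def zO_def ract_def vact_def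
  by (simp add: divide_inverse mult_ac)


lemma Zlem:
  assumes sp: "special_2group GG"
    and mh: "module_hom GG n \<rho> \<beta>"
    and cc: "cochain2 (pi0 GG) {1..n} c" and cc': "cochain2 (pi0 GG) {1..n'} c'"
    and cy: "\<forall>g1\<in>carrier (pi0 GG). \<forall>g2\<in>carrier (pi0 GG). \<forall>g3\<in>carrier (pi0 GG).
        eq_on {1..n} (cob2 (pi0 GG) (vact \<rho>) c g1 g2 g3) (\<beta> (alpha GG g1 g2 g3))"
    and cy': "\<forall>g1\<in>carrier (pi0 GG). \<forall>g2\<in>carrier (pi0 GG). \<forall>g3\<in>carrier (pi0 GG).
        eq_on {1..n'} (cob2 (pi0 GG) (vact \<rho>') c' g1 g2 g3) (\<beta>' (alpha GG g1 g2 g3))"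
    and O: "Orb \<subseteq> Iset GG n' n \<beta> \<beta>'"
  shows "zO c c' \<in> Z2 (pi0 GG) Orb (orbit_act \<rho> \<rho>')"
proof -
  have mem: "i' \<in> {1..n'} \<and> i \<in> {1..n} \<and> (\<lambda>u\<in>pi1 GG. \<beta>' u i') = (\<lambda>u\<in>pi1 GG. \<beta> u i)"
    if "(i', i) \<in> Orb" for i' i
    using O that unfolding Iset_def Mset_def by blast
  show ?thesis unfolding Z2_def
  proof (intro CollectI conjI ballI)
    show "cochain2 (pi0 GG) Orb (zO c c')" unfolding cochain2_def units_on_def
    proof (intro ballI)
      fix g1 g2 p assume g: "g1 \<in> carrier (pi0 GG)" "g2 \<in> carrier (pi0 GG)" and p: "p \<in> Orb"
      obtain i' i where pi: "p = (i', i)" by (cases p)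
      show "zO c c' g1 g2 p \<noteq> 0" using mem[of i' i] p pi g cc cc'
        unfolding cochain2_def units_on_def zO_def by auto
    qed
  next
    fix g1 g2 g3 assume g: "g1 \<in> carrier (pi0 GG)" "g2 \<in> carrier (pi0 GG)" "g3 \<in> carrier (pi0 GG)"
    show "eq_on Orb (cob2 (pi0 GG) (orbit_act \<rho> \<rho>') (zO c c') g1 g2 g3) (\<lambda>_. 1)"
      unfolding eq_on_def
    proof
      fix p assume p: "p \<in> Orb"
      obtain i' i where pi: "p = (i', i)" by (cases p)
      have m: "i' \<in> {1..n'}" "i \<in> {1..n}" "(\<lambda>u\<in>pi1 GG. \<beta>' u i') = (\<lambda>u\<in>pi1 GG. \<beta> u i)"
        using mem[of i' i] p pi by auto
      have a: "alpha GG g1 g2 g3 \<in> pi1 GG" using alpha_mem[OF sp g] .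
      have eqb: "\<beta>' (alpha GG g1 g2 g3) i' = \<beta> (alpha GG g1 g2 g3) i"
        using fun_cong[OF m(3), of "alpha GG g1 g2 g3"] a by simp
      have nz: "\<beta> (alpha GG g1 g2 g3) i \<noteq> 0" using mh a m(2) unfolding module_hom_def units_on_def by blast
      have e1: "cob2 (pi0 GG) (vact \<rho>) c g1 g2 g3 i = \<beta> (alpha GG g1 g2 g3) i"
        using cy g m(2) unfolding eq_on_def by blast
      have e2: "cob2 (pi0 GG) (vact \<rho>') c' g1 g2 g3 i' = \<beta>' (alpha GG g1 g2 g3) i'"
        using cy' g m(1) unfolding eq_on_def by blast
      show "cob2 (pi0 GG) (orbit_act \<rho> \<rho>') (zO c c') g1 g2 g3 p = 1"
        unfolding pi zO_cob2 e1 e2 eqb using nz by simp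
    qed
  qed
qed

lemma ct_cob2:
  assumes G: "group G" and pr: "perm_rep G n \<rho>" and x: "cochain1 G {1..n} x"
    and g: "g1 \<in> carrier G" "g2 \<in> carrier G" "g3 \<in> carrier G" and i: "i \<in> {1..n}"
  shows "cob2 G (vact \<rho>) (\<lambda>g1 g2 i. c g1 g2 i * cob1 G (vact \<rho>) x g1 g2 i) g1 g2 g3 i
       = cob2 G (vact \<rho>) c g1 g2 g3 i"
proof -
  interpret G: group G by (rule G)
  define j where "j = Hilbert_Choice.inv (\<rho> g1) i"
  define k where "k = Hilbert_Choice.inv (\<rho> g2) j"
  have j: "j \<in> {1..n}" using perm_inv_mem[OF pr g(1) i] j_def by simp
  have k: "k \<in> {1..n}" using perm_inv_mem[OF pr g(2) j] k_def by simp
  have e1: "Hilbert_Choice.inv (\<rho> (g1 \<otimes>\<^bsub>G\<^esub> g2)) i = k"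
    using perm_inv_mult[OF pr g(1) g(2)] j_def k_def by simp
  have as: "g1 \<otimes>\<^bsub>G\<^esub> g2 \<otimes>\<^bsub>G\<^esub> g3 = g1 \<otimes>\<^bsub>G\<^esub> (g2 \<otimes>\<^bsub>G\<^esub> g3)" using g by (simp add: G.m_assoc)
  have xnz: "\<And>g l. g \<in> carrier G \<Longrightarrow> l \<in> {1..n} \<Longrightarrow> x g l \<noteq> 0"
    using x unfolding cochain1_def units_on_def by blast
  have n1: "x g3 k \<noteq> 0" "x g2 j \<noteq> 0" "x (g2 \<otimes>\<^bsub>G\<^esub> g3) j \<noteq> 0" "x g1 i \<noteq> 0"
    "x (g1 \<otimes>\<^bsub>G\<^esub> (g2 \<otimes>\<^bsub>G\<^esub> g3)) i \<noteq> 0" "x (g1 \<otimes>\<^bsub>G\<^esub> g2) i \<noteq> 0"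
    using xnz g i j k by auto
  have gen: "\<And>a b cc d A B C D :: complex. (a*A)*(b*B)/((cc*C)*(d*D)) = (a*b/(cc*d)) * (A*B/(C*D))"
    by (simp add: divide_inverse mult_ac)
  have "cob2 G (vact \<rho>) (\<lambda>g1 g2 i. c g1 g2 i * cob1 G (vact \<rho>) x g1 g2 i) g1 g2 g3 i
      = cob2 G (vact \<rho>) c g1 g2 g3 i *
        ((x g3 k * x g2 j / x (g2 \<otimes>\<^bsub>G\<^esub> g3) j) * (x (g2 \<otimes>\<^bsub>G\<^esub> g3) j * x g1 i / x (g1 \<otimes>\<^bsub>G\<^esub> (g2 \<otimes>\<^bsub>G\<^esub> g3)) i)
         / ((x g3 k * x (g1 \<otimes>\<^bsub>G\<^esub> g2) i / x (g1 \<otimes>\<^bsub>G\<^esub> (g2 \<otimes>\<^bsub>G\<^esub> g3)) i) * (x g2 j * x g1 i / x (g1 \<otimes>\<^bsub>G\<^esub> g2) i)))"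
    unfolding cob2_def cob1_def vact_def j_def[symmetric] k_def[symmetric] e1 as gen ..
  also have "\<dots> = cob2 G (vact \<rho>) c g1 g2 g3 i" using n1 by (simp add: field_simps)
  finally show ?thesis .
qed


lemma adm_parts:
  assumes "admissible GG n \<rho> \<beta> c"
  shows "perm_rep (pi0 GG) n \<rho> \<and> module_hom GG n \<rho> \<beta> \<and> cochain2 (pi0 GG) {1..n} c \<and>
     (\<forall>g1\<in>carrier (pi0 GG). \<forall>g2\<in>carrier (pi0 GG). \<forall>g3\<in>carrier (pi0 GG).
        eq_on {1..n} (cob2 (pi0 GG) (vact \<rho>) c g1 g2 g3) (\<beta> (alpha GG g1 g2 g3)))"
  using assms unfolding admissible_def normalized_cochain2_def
  apply (elim conjE) apply (intro conjI) by assumption+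

theorem mainTheorem9:
  fixes GG :: "('g, 'm) two_group"
    and n n' :: nat and \<rho> \<rho>' :: "'g \<Rightarrow> nat \<Rightarrow> nat"
    and \<beta> \<beta>' :: "'m \<Rightarrow> nat \<Rightarrow> complex"
    and c c' :: "'g \<Rightarrow> 'g \<Rightarrow> nat \<Rightarrow> complex"
    and Orb :: "(nat \<times> nat) set"
  assumes "special_2group GG"
    and "admissible GG n \<rho> \<beta> c"
    and "admissible GG n' \<rho>' \<beta>' c'"
    and "is_orbit (pi0 GG) n' n \<rho> \<rho>' Orb"
    and "Orb \<subseteq> Iset GG n' n \<beta> \<beta>'"
  shows "zO c c' \<in> Z2 (pi0 GG) Orb (orbit_act \<rho> \<rho>')
     \<and> (\<forall>x x'. normalized_cochain1 (pi0 GG) {1..n} x \<longrightarrow>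
               normalized_cochain1 (pi0 GG) {1..n'} x' \<longrightarrow>
          (let ct = (\<lambda>g1 g2 i. c g1 g2 i * cob1 (pi0 GG) (vact \<rho>) x g1 g2 i);
               ct' = (\<lambda>g1 g2 i. c' g1 g2 i * cob1 (pi0 GG) (vact \<rho>') x' g1 g2 i)
           in zO ct ct' \<in> Z2 (pi0 GG) Orb (orbit_act \<rho> \<rho>') \<and>
              cohomologous2 (pi0 GG) Orb (orbit_act \<rho> \<rho>') (zO c c') (zO ct ct')))"
proof -
  note sp = assms(1)
  have G: "group (pi0 GG)" using sp_group[OF sp] .
  have pr: "perm_rep (pi0 GG) n \<rho>" and mh: "module_hom GG n \<rho> \<beta>"
    and cc: "cochain2 (pi0 GG) {1..n} c"
    and cy: "\<forall>g1\<in>carrier (pi0 GG). \<forall>g2\<in>carrier (pi0 GG). \<forall>g3\<in>carrier (pi0 GG).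
        eq_on {1..n} (cob2 (pi0 GG) (vact \<rho>) c g1 g2 g3) (\<beta> (alpha GG g1 g2 g3))"
    using adm_parts[OF assms(2)] by auto
  have pr': "perm_rep (pi0 GG) n' \<rho>'"
    and cc': "cochain2 (pi0 GG) {1..n'} c'"
    and cy': "\<forall>g1\<in>carrier (pi0 GG). \<forall>g2\<in>carrier (pi0 GG). \<forall>g3\<in>carrier (pi0 GG).
        eq_on {1..n'} (cob2 (pi0 GG) (vact \<rho>') c' g1 g2 g3) (\<beta>' (alpha GG g1 g2 g3))"
    using adm_parts[OF assms(3)] by auto
  have O: "Orb \<subseteq> Iset GG n' n \<beta> \<beta>'" by (rule assms(5))
  have mem: "i' \<in> {1..n'} \<and> i \<in> {1..n}" if "(i', i) \<in> Orb" for i' i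
    using O that unfolding Iset_def Mset_def by blast
  have part1: "zO c c' \<in> Z2 (pi0 GG) Orb (orbit_act \<rho> \<rho>')"
    by (rule Zlem[OF sp mh cc cc' cy cy' O])
  show ?thesis
  proof (intro conjI allI impI part1)
    fix x x' assume x: "normalized_cochain1 (pi0 GG) {1..n} x"
      and x': "normalized_cochain1 (pi0 GG) {1..n'} x'"
    have x1: "cochain1 (pi0 GG) {1..n} x" and x1': "cochain1 (pi0 GG) {1..n'} x'"
      using x x' unfolding normalized_cochain1_def by auto
    define ct where "ct = (\<lambda>g1 g2 i. c g1 g2 i * cob1 (pi0 GG) (vact \<rho>) x g1 g2 i)"
    define ct' where "ct' = (\<lambda>g1 g2 i. c' g1 g2 i * cob1 (pi0 GG) (vact \<rho>') x' g1 g2 i)"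
    have cob1nz: "cob1 (pi0 GG) (vact r) y g1 g2 i \<noteq> 0"
      if "perm_rep (pi0 GG) m r" "cochain1 (pi0 GG) {1..m} y" "g1 \<in> carrier (pi0 GG)"
         "g2 \<in> carrier (pi0 GG)" "i \<in> {1..m}" for m r y g1 g2 i
    proof -
      have j: "Hilbert_Choice.inv (r g1) i \<in> {1..m}" by (rule perm_inv_mem[OF that(1,3,5)])
      have gg: "g1 \<otimes>\<^bsub>pi0 GG\<^esub> g2 \<in> carrier (pi0 GG)"
        by (rule monoid.m_closed[OF group.is_monoid[OF G] that(3,4)])
      have yn: "\<And>g l. g \<in> carrier (pi0 GG) \<Longrightarrow> l \<in> {1..m} \<Longrightarrow> y g l \<noteq> 0"
        using that(2) unfolding cochain1_def units_on_def by blast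
      have "y g2 (Hilbert_Choice.inv (r g1) i) \<noteq> 0" "y g1 i \<noteq> 0" "y (g1 \<otimes>\<^bsub>pi0 GG\<^esub> g2) i \<noteq> 0"
        using yn[OF that(4) j] yn[OF that(3) that(5)] yn[OF gg that(5)] .
      then show ?thesis unfolding cob1_def vact_def by simp
    qed
    have cct: "cochain2 (pi0 GG) {1..n} ct"
      using cc cob1nz[OF pr x1] unfolding ct_def cochain2_def units_on_def by auto
    have cct': "cochain2 (pi0 GG) {1..n'} ct'"
      using cc' cob1nz[OF pr' x1'] unfolding ct'_def cochain2_def units_on_def by auto
    have cyt: "\<forall>g1\<in>carrier (pi0 GG). \<forall>g2\<in>carrier (pi0 GG). \<forall>g3\<in>carrier (pi0 GG).
        eq_on {1..n} (cob2 (pi0 GG) (vact \<rho>) ct g1 g2 g3) (\<beta> (alpha GG g1 g2 g3))"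
      using cy ct_cob2[OF G pr x1] unfolding ct_def eq_on_def by simp
    have cyt': "\<forall>g1\<in>carrier (pi0 GG). \<forall>g2\<in>carrier (pi0 GG). \<forall>g3\<in>carrier (pi0 GG).
        eq_on {1..n'} (cob2 (pi0 GG) (vact \<rho>') ct' g1 g2 g3) (\<beta>' (alpha GG g1 g2 g3))"
      using cy' ct_cob2[OF G pr' x1'] unfolding ct'_def eq_on_def by simp
    have z2: "zO ct ct' \<in> Z2 (pi0 GG) Orb (orbit_act \<rho> \<rho>')"
      by (rule Zlem[OF sp mh cct cct' cyt cyt' O])
    define y where "y = (\<lambda>g (j', j). x' g j' / x g j :: complex)"
    have coh: "cohomologous2 (pi0 GG) Orb (orbit_act \<rho> \<rho>') (zO c c') (zO ct ct')"
      unfolding cohomologous2_def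
    proof (intro exI conjI ballI)
      show "cochain1 (pi0 GG) Orb y" unfolding cochain1_def units_on_def
      proof (intro ballI)
        fix g p assume g: "g \<in> carrier (pi0 GG)" and p: "p \<in> Orb"
        obtain i' i where pi: "p = (i', i)" by (cases p)
        show "y g p \<noteq> 0" using mem[of i' i] p pi g x1 x1'
          unfolding y_def cochain1_def units_on_def by auto
      qed
    next
      fix g1 g2 assume "g1 \<in> carrier (pi0 GG)" "g2 \<in> carrier (pi0 GG)"
      show "eq_on Orb (zO ct ct' g1 g2) (\<lambda>p. zO c c' g1 g2 p * cob1 (pi0 GG) (orbit_act \<rho> \<rho>') y g1 g2 p)"
        unfolding eq_on_def
      proof
        fix p assume "p \<in> Orb"
        obtain i' i where pi: "p = (i', i)" by (cases p)
        show "zO ct ct' g1 g2 p = zO c c' g1 g2 p * cob1 (pi0 GG) (orbit_act \<rho> \<rho>') y g1 g2 p"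
          unfolding pi ct_def ct'_def y_def by (rule zO_cob1)
      qed
    qed
    show "let ct = (\<lambda>g1 g2 i. c g1 g2 i * cob1 (pi0 GG) (vact \<rho>) x g1 g2 i);
               ct' = (\<lambda>g1 g2 i. c' g1 g2 i * cob1 (pi0 GG) (vact \<rho>') x' g1 g2 i)
           in zO ct ct' \<in> Z2 (pi0 GG) Orb (orbit_act \<rho> \<rho>') \<and>
              cohomologous2 (pi0 GG) Orb (orbit_act \<rho> \<rho>') (zO c c') (zO ct ct')"
      using z2 coh unfolding ct_def ct'_def Let_def by blast
  qed
qed

end
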